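(* Consider an instance of the food delivery problem with $k$ vehicles and capacity $c$ on a graph $G=(V,E)$ with depot $o$, and let $F$ be at least the optimum offline maximum flow time. Let $a\le b$ and let $R'$ be the set of requests arriving in time $[a,b]$. Then the optimum CVRP tour with capacity $c$ for the requests $R'$ (each request having pickup location equal to its delivery location) has length at most $k(b-a+2F)$.
   Context: An FDP instance consists of a connected undirected graph $G=(V,E)$ with edge lengths $\ell:E\to\mathbb{R}_{>0}$, a depot $o\in V$, $k\ge 1$ unit-speed vehicles initially at $o$, capacity $c\in\mathbb{Z}_{>0}\cup\{\infty\}$, and requests $\rho=(r_\rho,v_\rho)$ with arrival time $r_\rho\ge0$ and delivery location $v_\rho$. A trip is a triple $(t,(u_0=o,u_1,\dots,u_z=o),R'')$ with start time $t$, a closed walk in $G$ with $u_j\ne o$ for $1\le j\le z-1$, and a set $R''$ of at most $c$ requests with $r_\rho\le t$ whose locations appear on the walk; $\rho$ is served when the walk first reaches $v_\rho$. Each vehicle performs a sequence of trips, each starting no earlier than the previous one completes; each request is served by exactly one trip; the flow time of $\rho$ is its service time minus $r_\rho$, and the objective is the maximum flow time. CVRP: given $G,\ell,o,c$ and requests with pickup locations, find a minimum-length closed walk $(o,u_1,\dots,u_z,o)$ and sets $Q_j$ of requests with pickup location $u_j$ partitioning the requests such that for every $1\le j\le j'\le z$ with $u_i\ne o$ for all $i\in[j,j']$, $|\bigcup_{i=j}^{j'}Q_i|\le c$. *)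

theory Defs
  imports Main "HOL-Library.Extended_Nat"
begin

definition is_walk :: "'v set set \<Rightarrow> 'v list \<Rightarrow> bool" where
  "is_walk E ws \<longleftrightarrow> ws \<noteq> [] \<and> (\<forall>i. Suc i < length ws \<longrightarrow> {ws ! i, ws ! Suc i} \<in> E)"

definition walk_len :: "('v set \<Rightarrow> real) \<Rightarrow> 'v list \<Rightarrow> real" where
  "walk_len l ws = (\<Sum>i < length ws - 1. l {ws ! i, ws ! Suc i})"

definition fdp_graph :: "'v set \<Rightarrow> 'v set set \<Rightarrow> ('v set \<Rightarrow> real) \<Rightarrow> 'v \<Rightarrow> bool" where
  "fdp_graph V E l dep \<longleftrightarrow> finite V \<and> dep \<in> V
     \<and> E \<subseteq> {{u, w} | u w. u \<in> V \<and> w \<in> V \<and> u \<noteq> w}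
     \<and> (\<forall>e\<in>E. l e > 0)
     \<and> (\<forall>u\<in>V. \<forall>w\<in>V. \<exists>ws. is_walk E ws \<and> hd ws = u \<and> last ws = w)"

definition is_trip_walk :: "'v set set \<Rightarrow> 'v \<Rightarrow> 'v list \<Rightarrow> bool" where
  "is_trip_walk E dep ws \<longleftrightarrow> is_walk E ws \<and> hd ws = dep \<and> last ws = dep
     \<and> (\<forall>j. 0 < j \<and> Suc j < length ws \<longrightarrow> ws ! j \<noteq> dep)"

type_synonym ('v, 'r) trip = "real \<times> 'v list \<times> 'r set"

definition valid_trip :: "'v set set \<Rightarrow> 'v \<Rightarrow> enat \<Rightarrow> ('r \<Rightarrow> real) \<Rightarrow> ('r \<Rightarrow> 'v)
    \<Rightarrow> 'r set \<Rightarrow> ('v, 'r) trip \<Rightarrow> bool" where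
  "valid_trip E dep c arr loc R tr \<longleftrightarrow>
     (case tr of (t, ws, S) \<Rightarrow> t \<ge> 0 \<and> is_trip_walk E dep ws \<and> S \<subseteq> R \<and> enat (card S) \<le> c
        \<and> (\<forall>\<rho>\<in>S. arr \<rho> \<le> t \<and> loc \<rho> \<in> set ws))"

definition trip_end :: "('v set \<Rightarrow> real) \<Rightarrow> ('v, 'r) trip \<Rightarrow> real" where
  "trip_end l tr = fst tr + walk_len l (fst (snd tr))"

definition first_visit :: "'v list \<Rightarrow> 'v \<Rightarrow> nat" where
  "first_visit ws v = (LEAST i. i < length ws \<and> ws ! i = v)"

definition visit_time :: "('v set \<Rightarrow> real) \<Rightarrow> ('v, 'r) trip \<Rightarrow> 'v \<Rightarrow> real" where
  "visit_time l tr v = fst tr + walk_len l (take (Suc (first_visit (fst (snd tr)) v)) (fst (snd tr)))"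

(* schedule: vehicle i (i < k) performs the trip sequence sched i *)
definition feasible_schedule :: "'v set set \<Rightarrow> ('v set \<Rightarrow> real) \<Rightarrow> 'v \<Rightarrow> nat \<Rightarrow> enat
    \<Rightarrow> ('r \<Rightarrow> real) \<Rightarrow> ('r \<Rightarrow> 'v) \<Rightarrow> 'r set \<Rightarrow> (nat \<Rightarrow> ('v, 'r) trip list) \<Rightarrow> bool" where
  "feasible_schedule E l dep k c arr loc R sched \<longleftrightarrow>
     (\<forall>i<k. \<forall>j<length (sched i). valid_trip E dep c arr loc R (sched i ! j))
     \<and> (\<forall>i<k. \<forall>j. Suc j < length (sched i) \<longrightarrow> trip_end l (sched i ! j) \<le> fst (sched i ! Suc j))
     \<and> (\<forall>\<rho>\<in>R. \<exists>!p. fst p < k \<and> snd p < length (sched (fst p))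
                     \<and> \<rho> \<in> snd (snd (sched (fst p) ! snd p)))"

definition serving_trip :: "nat \<Rightarrow> 'r \<Rightarrow> (nat \<Rightarrow> ('v, 'r) trip list) \<Rightarrow> nat \<times> nat" where
  "serving_trip k \<rho> sched = (THE p. fst p < k \<and> snd p < length (sched (fst p))
                     \<and> \<rho> \<in> snd (snd (sched (fst p) ! snd p)))"

definition service_time :: "('v set \<Rightarrow> real) \<Rightarrow> nat \<Rightarrow> ('r \<Rightarrow> 'v) \<Rightarrow> (nat \<Rightarrow> ('v, 'r) trip list) \<Rightarrow> 'r \<Rightarrow> real" where
  "service_time l k loc sched \<rho> =
     (let p = serving_trip k \<rho> sched in visit_time l (sched (fst p) ! snd p) (loc \<rho>))"

(* maximum flow time (flow times are nonnegative; 0 for an empty request set) *)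
definition max_flow_time :: "('v set \<Rightarrow> real) \<Rightarrow> nat \<Rightarrow> ('r \<Rightarrow> real) \<Rightarrow> ('r \<Rightarrow> 'v) \<Rightarrow> 'r set
    \<Rightarrow> (nat \<Rightarrow> ('v, 'r) trip list) \<Rightarrow> real" where
  "max_flow_time l k arr loc R sched =
     Max (insert 0 ((\<lambda>\<rho>. service_time l k loc sched \<rho> - arr \<rho>) ` R))"

definition fdp_opt :: "'v set set \<Rightarrow> ('v set \<Rightarrow> real) \<Rightarrow> 'v \<Rightarrow> nat \<Rightarrow> enat
    \<Rightarrow> ('r \<Rightarrow> real) \<Rightarrow> ('r \<Rightarrow> 'v) \<Rightarrow> 'r set \<Rightarrow> real" where
  "fdp_opt E l dep k c arr loc R =
     Inf {max_flow_time l k arr loc R sched | sched. feasible_schedule E l dep k c arr loc R sched}"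

(* CVRP: closed walk ws = (dep, u_1, ..., u_z, dep); Q j are the requests picked up at position j, 1 \<le> j \<le> z *)
definition cvrp_feasible :: "'v set set \<Rightarrow> 'v \<Rightarrow> enat \<Rightarrow> ('r \<Rightarrow> 'v) \<Rightarrow> 'r set
    \<Rightarrow> 'v list \<Rightarrow> (nat \<Rightarrow> 'r set) \<Rightarrow> bool" where
  "cvrp_feasible E dep c loc Rq ws Q \<longleftrightarrow>
     is_walk E ws \<and> hd ws = dep \<and> last ws = dep
     \<and> (\<forall>j\<in>{1..<length ws - 1}. \<forall>\<rho>\<in>Q j. loc \<rho> = ws ! j)
     \<and> (\<Union>j\<in>{1..<length ws - 1}. Q j) = Rq
     \<and> (\<forall>j\<in>{1..<length ws - 1}. \<forall>j'\<in>{1..<length ws - 1}. j \<noteq> j' \<longrightarrow> Q j \<inter> Q j' = {})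
     \<and> (\<forall>j j'. 1 \<le> j \<and> j \<le> j' \<and> j' < length ws - 1 \<and> (\<forall>i\<in>{j..j'}. ws ! i \<noteq> dep)
          \<longrightarrow> enat (card (\<Union>i\<in>{j..j'}. Q i)) \<le> c)"

definition cvrp_opt :: "'v set set \<Rightarrow> ('v set \<Rightarrow> real) \<Rightarrow> 'v \<Rightarrow> enat \<Rightarrow> ('r \<Rightarrow> 'v) \<Rightarrow> 'r set \<Rightarrow> real" where
  "cvrp_opt E l dep c loc Rq = Inf {walk_len l ws | ws Q. cvrp_feasible E dep c loc Rq ws Q}"

end

theory Submission
  imports Defs
begin


lemma is_walk_Nil[simp]: "\<not> is_walk E []" by (simp add: is_walk_def)
lemma is_walk_single[simp]: "is_walk E [x]" by (simp add: is_walk_def)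
lemma is_walk_Cons2[simp]: "is_walk E (x#y#zs) \<longleftrightarrow> {x,y} \<in> E \<and> is_walk E (y#zs)"
  unfolding is_walk_def
proof safe
  fix i assume h: "\<forall>i. Suc i < length (x # y # zs) \<longrightarrow> {(x # y # zs) ! i, (x # y # zs) ! Suc i} \<in> E"
  from h[rule_format, of 0] show "{x,y} \<in> E" by simp
  assume "Suc i < length (y # zs)"
  with h[rule_format, of "Suc i"] show "{(y # zs) ! i, (y # zs) ! Suc i} \<in> E" by simp
next
  fix i assume "{x,y} \<in> E" "\<forall>i. Suc i < length (y # zs) \<longrightarrow> {(y # zs) ! i, (y # zs) ! Suc i} \<in> E"
    "Suc i < length (x # y # zs)"
  then show "{(x # y # zs) ! i, (x # y # zs) ! Suc i} \<in> E" by (cases i) auto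
qed

lemma walk_len_Nil[simp]: "walk_len l [] = 0" by (simp add: walk_len_def)
lemma walk_len_single[simp]: "walk_len l [x] = 0" by (simp add: walk_len_def)
lemma walk_len_Cons2[simp]: "walk_len l (x#y#zs) = l {x,y} + walk_len l (y#zs)"
  unfolding walk_len_def by (simp add: sum.lessThan_Suc_shift del: sum.lessThan_Suc)

lemma is_walk_append:
  "is_walk E xs \<Longrightarrow> is_walk E ys \<Longrightarrow> last xs = hd ys \<Longrightarrow> is_walk E (xs @ tl ys)"
proof (induction xs rule: induct_list012)
  case (2 x) then show ?case by (cases ys) auto
next
  case (3 x y zs) then show ?case by auto
qed simp

lemma walk_len_append:
  "xs \<noteq> [] \<Longrightarrow> ys \<noteq> [] \<Longrightarrow> last xs = hd ys \<Longrightarrow> walk_len l (xs @ tl ys) = walk_len l xs + walk_len l ys"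
proof (induction xs rule: induct_list012)
  case (2 x) then show ?case by (cases ys) auto
next
  case (3 x y zs) then show ?case by auto
qed simp

lemma is_walk_rev_len: "is_walk E xs \<Longrightarrow> is_walk E (rev xs) \<and> walk_len l (rev xs) = walk_len l xs"
proof (induction xs rule: induct_list012)
  case (3 x y zs)
  then have ih: "is_walk E (rev (y#zs))" "walk_len l (rev (y#zs)) = walk_len l (y#zs)" by auto
  have e: "rev (x#y#zs) = rev (y#zs) @ tl [y,x]" by simp
  have w: "is_walk E [y,x]" using 3 by (simp add: insert_commute)
  show ?case unfolding e
    using is_walk_append[OF ih(1) w] walk_len_append[of "rev (y#zs)" "[y,x]" l] ih(2)
    by (simp add: insert_commute)
qed auto

lemma is_walk_suffix: "is_walk E (xs @ ys) \<Longrightarrow> ys \<noteq> [] \<Longrightarrow> is_walk E ys"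
proof (induction xs rule: induct_list012)
  case (2 x) then show ?case by (cases ys) auto
next
  case (3 x y zs) then show ?case by auto
qed simp

lemma is_walk_prefix: "is_walk E (xs @ ys) \<Longrightarrow> xs \<noteq> [] \<Longrightarrow> is_walk E xs"
proof (induction xs rule: induct_list012)
  case (3 x y zs) then show ?case by auto
qed auto

lemma walk_len_nonneg: "is_walk E xs \<Longrightarrow> \<forall>e\<in>E. l e > 0 \<Longrightarrow> walk_len l xs \<ge> 0"
proof (induction xs rule: induct_list012)
  case (3 x y zs) then show ?case by (auto intro: add_nonneg_nonneg less_imp_le)
qed auto

lemma walk_len_prefix_le:
  assumes "is_walk E (xs @ ys)" "xs \<noteq> []" "\<forall>e\<in>E. l e > 0"
  shows "walk_len l xs \<le> walk_len l (xs @ ys)"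
proof (cases "ys = []")
  case False
  have e: "xs @ ys = butlast xs @ (last xs # ys)" using assms(2) by simp
  have w: "is_walk E (last xs # ys)" using is_walk_suffix[of E "butlast xs" "last xs # ys"] assms(1) e by simp
  have "xs @ ys = xs @ tl (last xs # ys)" by simp
  then have "walk_len l (xs @ ys) = walk_len l xs + walk_len l (last xs # ys)"
    using walk_len_append[of xs "last xs # ys" l] assms(2) by simp
  with walk_len_nonneg[OF w assms(3)] show ?thesis by simp
qed simp



lemma trip_walk_char:
  "is_trip_walk E dep ws \<longleftrightarrow> is_walk E ws \<and> (ws = [dep] \<or> (\<exists>mid. ws = dep # mid @ [dep] \<and> dep \<notin> set mid))"
proof
  assume h: "is_trip_walk E dep ws"
  then have w: "is_walk E ws" "hd ws = dep" "last ws = dep"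
    and nd: "\<forall>j. 0 < j \<and> Suc j < length ws \<longrightarrow> ws ! j \<noteq> dep"
    by (auto simp: is_trip_walk_def)
  have "ws \<noteq> []" using w by auto
  show "is_walk E ws \<and> (ws = [dep] \<or> (\<exists>mid. ws = dep # mid @ [dep] \<and> dep \<notin> set mid))"
  proof (cases "length ws = 1")
    case True
    then obtain x where "ws = [x]" by (cases ws) auto
    with w show ?thesis by simp
  next
    case False
    then obtain x ys where ws: "ws = x # ys" "ys \<noteq> []" using \<open>ws \<noteq> []\<close> by (cases ws) auto
    then obtain mid z where ys: "ys = mid @ [z]" by (metis rev_exhaust)
    have ws2: "ws = dep # mid @ [dep]" using w ws ys by simp
    have "dep \<notin> set mid"
    proof
      assume "dep \<in> set mid"
      then obtain i where i: "i < length mid" "mid ! i = dep" by (auto simp: in_set_conv_nth)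
      have "ws ! Suc i = dep" using i ws2 by (simp add: nth_append)
      moreover have "Suc (Suc i) < length ws" using i ws2 by simp
      ultimately show False using nd by auto
    qed
    with ws2 w show ?thesis by blast
  qed
next
  assume h: "is_walk E ws \<and> (ws = [dep] \<or> (\<exists>mid. ws = dep # mid @ [dep] \<and> dep \<notin> set mid))"
  show "is_trip_walk E dep ws"
  proof (cases "ws = [dep]")
    case True then show ?thesis using h by (simp add: is_trip_walk_def)
  next
    case False
    then obtain mid where m: "ws = dep # mid @ [dep]" "dep \<notin> set mid" using h by blast
    have "ws ! j \<noteq> dep" if "0 < j" "Suc j < length ws" for j
    proof -
      obtain i where i: "j = Suc i" using \<open>0 < j\<close> by (cases j) auto
      have "i < length mid" using that m i by simp
      then have "ws ! j = mid ! i" using m i by (simp add: nth_append)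
      then show ?thesis using m \<open>i < length mid\<close> nth_mem by fastforce
    qed
    then show ?thesis using h m by (simp add: is_trip_walk_def)
  qed
qed

lemma out_and_back:
  assumes "is_walk E (dep # pm)" "pm \<noteq> []" "dep \<notin> set pm"
  shows "is_trip_walk E dep ((dep # pm) @ tl (rev (dep # pm)))"
    and "walk_len l ((dep # pm) @ tl (rev (dep # pm))) = 2 * walk_len l (dep # pm)"
    and "set (dep # pm) \<subseteq> set ((dep # pm) @ tl (rev (dep # pm)))"
proof -
  have r: "is_walk E (rev (dep # pm))" "walk_len l (rev (dep # pm)) = walk_len l (dep # pm)"
    using is_walk_rev_len[OF assms(1)] by auto
  have lh: "last (dep # pm) = hd (rev (dep # pm))" by (simp add: hd_rev)
  have w: "is_walk E ((dep # pm) @ tl (rev (dep # pm)))"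
    using is_walk_append[OF assms(1) r(1) lh] .
  have e: "(dep # pm) @ tl (rev (dep # pm)) = dep # (pm @ tl (rev pm)) @ [dep]"
    using assms(2) by simp
  have "dep \<notin> set (pm @ tl (rev pm))" using assms(3) by (metis Un_iff list.set_sel(2) set_append set_rev tl_Nil)
  then show "is_trip_walk E dep ((dep # pm) @ tl (rev (dep # pm)))"
    unfolding trip_walk_char using w e by blast
  show "walk_len l ((dep # pm) @ tl (rev (dep # pm))) = 2 * walk_len l (dep # pm)"
    using walk_len_append[of "dep # pm" "rev (dep # pm)" l] lh r(2) by simp
  show "set (dep # pm) \<subseteq> set ((dep # pm) @ tl (rev (dep # pm)))" by auto
qed



lemma fv_props:
  assumes "v \<in> set ws"
  shows "first_visit ws v < length ws \<and> ws ! first_visit ws v = v"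
proof -
  obtain i where "i < length ws" "ws ! i = v" using assms by (auto simp: in_set_conv_nth)
  then show ?thesis unfolding first_visit_def by (metis (mono_tags, lifting) LeastI)
qed

lemma fv_le: "i < length ws \<Longrightarrow> ws ! i = v \<Longrightarrow> first_visit ws v \<le> i"
  unfolding first_visit_def by (rule Least_le) simp

lemma cvrp_empty: "cvrp_feasible E dep c loc {} [dep] (\<lambda>_. {})"
  by (simp add: cvrp_feasible_def)

lemma cvrp_base:
  assumes tw: "is_trip_walk E dep ws" and fin: "finite Rq" and cap: "enat (card Rq) \<le> c"
    and locs: "\<forall>\<rho>\<in>Rq. loc \<rho> \<in> set ws \<and> loc \<rho> \<noteq> dep"
  shows "\<exists>Q. cvrp_feasible E dep c loc Rq ws Q"
proof -
  define Q where "Q j = {\<rho>\<in>Rq. first_visit ws (loc \<rho>) = j}" for j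
  have w: "is_walk E ws" "hd ws = dep" "last ws = dep" using tw by (auto simp: is_trip_walk_def)
  have ne: "ws \<noteq> []" using w by auto
  have rng: "first_visit ws (loc \<rho>) \<in> {1..<length ws - 1}" if "\<rho> \<in> Rq" for \<rho>
  proof -
    let ?f = "first_visit ws (loc \<rho>)"
    have f: "?f < length ws" "ws ! ?f = loc \<rho>" using fv_props[of "loc \<rho>" ws] locs that by auto
    have "?f \<noteq> 0" using f w ne locs that by (metis hd_conv_nth)
    moreover have "?f \<noteq> length ws - 1" using f w ne locs that by (metis last_conv_nth)
    ultimately show ?thesis using f by auto
  qed
  have "cvrp_feasible E dep c loc Rq ws Q"
    unfolding cvrp_feasible_def
  proof (intro conjI ballI allI impI)
    show "is_walk E ws" "hd ws = dep" "last ws = dep" by (fact w)+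
  next
    fix j \<rho> assume "j \<in> {1..<length ws - 1}" "\<rho> \<in> Q j"
    then show "loc \<rho> = ws ! j" using fv_props[of "loc \<rho>" ws] locs unfolding Q_def by auto
  next
    show "(\<Union>j\<in>{1..<length ws - 1}. Q j) = Rq"
      using rng unfolding Q_def by blast
  next
    fix j j' assume "j \<in> {1..<length ws - 1}" "j' \<in> {1..<length ws - 1}" "j \<noteq> j'"
    then show "Q j \<inter> Q j' = {}" unfolding Q_def by auto
  next
    fix j j'
    have "(\<Union>i\<in>{j..j'}. Q i) \<subseteq> Rq" unfolding Q_def by auto
    then have "card (\<Union>i\<in>{j..j'}. Q i) \<le> card Rq" using fin by (rule card_mono[rotated])
    then show "enat (card (\<Union>i\<in>{j..j'}. Q i)) \<le> c" using cap
      by (meson enat_ord_simps(1) order_trans)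
  qed
  then show ?thesis by blast
qed



lemma cvrp_compose:
  assumes f1: "cvrp_feasible E dep c loc R1 ws1 Q1" and f2: "cvrp_feasible E dep c loc R2 ws2 Q2"
    and fin: "finite R2"
  shows "\<exists>Q. cvrp_feasible E dep c loc (R1 \<union> R2) (ws1 @ tl ws2) Q"
proof -
  define d where "d = length ws1 - 1"
  define n2 where "n2 = length ws2"
  define ws where "ws = ws1 @ tl ws2"
  have w1: "is_walk E ws1" "hd ws1 = dep" "last ws1 = dep"
    and l1: "\<forall>j\<in>{1..<length ws1 - 1}. \<forall>\<rho>\<in>Q1 j. loc \<rho> = ws1 ! j"
    and u1: "(\<Union>j\<in>{1..<length ws1 - 1}. Q1 j) = R1"
    and d1: "\<forall>j\<in>{1..<length ws1 - 1}. \<forall>j'\<in>{1..<length ws1 - 1}. j \<noteq> j' \<longrightarrow> Q1 j \<inter> Q1 j' = {}"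
    and c1: "\<forall>j j'. 1 \<le> j \<and> j \<le> j' \<and> j' < length ws1 - 1 \<and> (\<forall>i\<in>{j..j'}. ws1 ! i \<noteq> dep)
          \<longrightarrow> enat (card (\<Union>i\<in>{j..j'}. Q1 i)) \<le> c"
    using f1 unfolding cvrp_feasible_def by blast+
  have w2: "is_walk E ws2" "hd ws2 = dep" "last ws2 = dep"
    and l2: "\<forall>j\<in>{1..<n2 - 1}. \<forall>\<rho>\<in>Q2 j. loc \<rho> = ws2 ! j"
    and u2: "(\<Union>j\<in>{1..<n2 - 1}. Q2 j) = R2"
    and d2: "\<forall>j\<in>{1..<n2 - 1}. \<forall>j'\<in>{1..<n2 - 1}. j \<noteq> j' \<longrightarrow> Q2 j \<inter> Q2 j' = {}"
    and c2: "\<forall>j j'. 1 \<le> j \<and> j \<le> j' \<and> j' < n2 - 1 \<and> (\<forall>i\<in>{j..j'}. ws2 ! i \<noteq> dep)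
          \<longrightarrow> enat (card (\<Union>i\<in>{j..j'}. Q2 i)) \<le> c"
    using f2 unfolding cvrp_feasible_def n2_def by blast+
  have ne1: "ws1 \<noteq> []" and ne2: "ws2 \<noteq> []" using w1 w2 by auto
  then have n1: "length ws1 = Suc d" and n2p: "n2 \<ge> 1" unfolding d_def n2_def by (auto simp: Suc_le_eq)
  have lenws: "length ws = d + n2" unfolding ws_def using n1 n2p n2_def by simp
  have i1: "ws ! j = ws1 ! j" if "j < Suc d" for j unfolding ws_def using that n1 by (simp add: nth_append)
  have i2: "ws ! (d + j') = ws2 ! j'" if "j' < n2" for j'
  proof (cases j')
    case 0
    then show ?thesis using i1[of d] w1 w2 ne1 ne2 n1 by (simp add: last_conv_nth hd_conv_nth)
  next
    case (Suc m)
    then show ?thesis unfolding ws_def using that n1 ne2 n2_def by (simp add: nth_append nth_tl)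
  qed
  have wsd: "ws ! d = dep" using i2[of 0] n2p w2 ne2 by (simp add: hd_conv_nth)
  define Q where "Q j = (if j < d then Q1 j else if j = d then {} else Q2 (j - d) - R1)" for j
  have "cvrp_feasible E dep c loc (R1 \<union> R2) ws Q"
    unfolding cvrp_feasible_def
  proof (intro conjI ballI allI impI)
    show "is_walk E ws" unfolding ws_def using is_walk_append[OF w1(1) w2(1)] w1 w2 by simp
    show "hd ws = dep" unfolding ws_def using ne1 w1 by simp
    show "last ws = dep" unfolding ws_def using w1 w2 ne2
      by (cases "tl ws2 = []") (auto simp: last_append last_tl)
  next
    fix j \<rho> assume j: "j \<in> {1..<length ws - 1}" and r: "\<rho> \<in> Q j"
    show "loc \<rho> = ws ! j"
    proof (cases "j < d")
      case True then show ?thesis using r j l1 i1[of j] n1 unfolding Q_def by auto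
    next
      case False
      then have "j > d" using r unfolding Q_def by (cases "j = d") auto
      define j'' where "j'' = j - d"
      have j': "j = d + j''" "j'' \<ge> 1" using \<open>j > d\<close> unfolding j''_def by auto
      then have "j'' < n2 - 1" using j lenws by auto
      then show ?thesis using r j' l2 i2[of j''] unfolding Q_def by auto
    qed
  next
    show "(\<Union>j\<in>{1..<length ws - 1}. Q j) = R1 \<union> R2"
    proof
      show "(\<Union>j\<in>{1..<length ws - 1}. Q j) \<subseteq> R1 \<union> R2"
      proof
        fix \<rho> assume "\<rho> \<in> (\<Union>j\<in>{1..<length ws - 1}. Q j)"
        then obtain j where j: "j \<in> {1..<length ws - 1}" "\<rho> \<in> Q j" by blast
        show "\<rho> \<in> R1 \<union> R2"
        proof (cases "j < d")
          case True then show ?thesis using j u1 n1 unfolding Q_def by auto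
        next
          case False
          then have "j > d" using j unfolding Q_def by (cases "j = d") auto
          then have "j - d \<in> {1..<n2 - 1}" using j lenws by auto
          then show ?thesis using j u2 False \<open>j > d\<close> unfolding Q_def by auto
        qed
      qed
    next
      show "R1 \<union> R2 \<subseteq> (\<Union>j\<in>{1..<length ws - 1}. Q j)"
      proof
        fix \<rho> assume "\<rho> \<in> R1 \<union> R2"
        then consider "\<rho> \<in> R1" | "\<rho> \<in> R2 - R1" by blast
        then show "\<rho> \<in> (\<Union>j\<in>{1..<length ws - 1}. Q j)"
        proof cases
          case 1
          then obtain j where "j \<in> {1..<d}" "\<rho> \<in> Q1 j" using u1 n1 by auto
          then show ?thesis using lenws n2p unfolding Q_def by (intro UN_I[of j]) auto
        next
          case 2
          then obtain j where j: "j \<in> {1..<n2 - 1}" "\<rho> \<in> Q2 j" using u2 by auto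
          have "Q (d + j) = Q2 j - R1" unfolding Q_def using j by auto
          then show ?thesis using j 2 lenws by (intro UN_I[of "d + j"]) auto
        qed
      qed
    qed
  next
    fix j j' assume j: "j \<in> {1..<length ws - 1}" and j': "j' \<in> {1..<length ws - 1}" and ne: "j \<noteq> j'"
    have sub1: "Q1 i \<subseteq> R1" if "i \<in> {1..<d}" for i using u1 n1 that by auto
    have Qlo: "Q i = Q1 i" if "i < d" for i using that unfolding Q_def by simp
    have Qd: "Q d = {}" unfolding Q_def by simp
    have Qhi: "Q i = Q2 (i - d) - R1" if "d < i" for i using that unfolding Q_def by simp
    have jr: "j < length ws - 1" "j' < length ws - 1" "1 \<le> j" "1 \<le> j'" using j j' by auto
    consider "j < d" "j' < d" | "j < d" "d < j'" | "d < j" "j' < d" | "d < j" "d < j'" | "j = d \<or> j' = d"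
      by (metis linorder_neqE_nat)
    then show "Q j \<inter> Q j' = {}"
    proof cases
      case 1
      then have "j \<in> {1..<length ws1 - 1}" "j' \<in> {1..<length ws1 - 1}" using jr n1 by auto
      then show ?thesis using d1 ne Qlo 1 by metis
    next
      case 2
      then have "Q j \<subseteq> R1" using sub1[of j] Qlo jr by auto
      then show ?thesis using Qhi[of j'] 2 by blast
    next
      case 3
      then have "Q j' \<subseteq> R1" using sub1[of j'] Qlo jr by auto
      then show ?thesis using Qhi[of j] 3 by blast
    next
      case 4
      then have "j - d \<in> {1..<n2 - 1}" "j' - d \<in> {1..<n2 - 1}" "j - d \<noteq> j' - d"
        using jr lenws ne by auto
      then have "Q2 (j - d) \<inter> Q2 (j' - d) = {}" using d2 by blast
      then show ?thesis using Qhi 4 by blast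
    next
      case 5 then show ?thesis using Qd by blast
    qed
  next
    fix j j' assume h: "1 \<le> j \<and> j \<le> j' \<and> j' < length ws - 1 \<and> (\<forall>i\<in>{j..j'}. ws ! i \<noteq> dep)"
    have "d \<notin> {j..j'}" using h wsd by blast
    then consider "j' < d" | "d < j" by force
    then show "enat (card (\<Union>i\<in>{j..j'}. Q i)) \<le> c"
    proof cases
      case 1
      have e: "(\<Union>i\<in>{j..j'}. Q i) = (\<Union>i\<in>{j..j'}. Q1 i)" unfolding Q_def using 1 by auto
      have "\<forall>i\<in>{j..j'}. ws1 ! i \<noteq> dep" using h i1 1 by auto
      then show ?thesis unfolding e using c1 h 1 n1 by auto
    next
      case 2
      have sub: "(\<Union>i\<in>{j..j'}. Q i) \<subseteq> (\<Union>i\<in>{j-d..j'-d}. Q2 i)"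
      proof
        fix \<rho> assume "\<rho> \<in> (\<Union>i\<in>{j..j'}. Q i)"
        then obtain i where "i \<in> {j..j'}" "\<rho> \<in> Q i" by blast
        then show "\<rho> \<in> (\<Union>i\<in>{j-d..j'-d}. Q2 i)" using 2 unfolding Q_def
          by (intro UN_I[of "i - d"]) auto
      qed
      have "{j-d..j'-d} \<subseteq> {1..<n2 - 1}" using h 2 lenws by auto
      then have sub2: "(\<Union>i\<in>{j-d..j'-d}. Q2 i) \<subseteq> R2" using u2 by blast
      have nd: "\<forall>i\<in>{j-d..j'-d}. ws2 ! i \<noteq> dep"
      proof
        fix i assume i: "i \<in> {j-d..j'-d}"
        then have "d + i \<in> {j..j'}" using 2 by auto
        moreover have "i < n2" using i h lenws 2 by auto
        ultimately show "ws2 ! i \<noteq> dep" using h i2 by metis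
      qed
      have "enat (card (\<Union>i\<in>{j-d..j'-d}. Q2 i)) \<le> c"
      proof -
        have "1 \<le> j - d" "j - d \<le> j' - d" "j' - d < n2 - 1" using h 2 lenws by auto
        then show ?thesis using c2 nd by blast
      qed
      moreover have "card (\<Union>i\<in>{j..j'}. Q i) \<le> card (\<Union>i\<in>{j-d..j'-d}. Q2 i)"
        using sub sub2 fin by (meson card_mono finite_subset)
      ultimately show ?thesis by (meson enat_ord_simps(1) order_trans)
    qed
  qed
  then show ?thesis unfolding ws_def by blast
qed



definition concat_walks :: "'v \<Rightarrow> 'v list list \<Rightarrow> 'v list" where
  "concat_walks dep wss = foldr (\<lambda>w acc. w @ tl acc) wss [dep]"

lemma cvrp_concat:
  assumes "\<forall>p\<in>set P. finite (snd p) \<and> (\<exists>Q. cvrp_feasible E dep c loc (snd p) (fst p) Q)"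
  shows "(\<exists>Q. cvrp_feasible E dep c loc (\<Union>(snd ` set P)) (concat_walks dep (map fst P)) Q)
     \<and> walk_len l (concat_walks dep (map fst P)) = sum_list (map (\<lambda>p. walk_len l (fst p)) P)"
  using assms
proof (induction P)
  case Nil
  then show ?case using cvrp_empty[of E dep c loc] by (auto simp: concat_walks_def)
next
  case (Cons p P)
  let ?W = "concat_walks dep (map fst P)"
  let ?U = "\<Union>(snd ` set P)"
  from Cons obtain Q' where f': "cvrp_feasible E dep c loc ?U ?W Q'"
    and len': "walk_len l ?W = sum_list (map (\<lambda>p. walk_len l (fst p)) P)" by auto
  from Cons.prems obtain Q1 where f1: "cvrp_feasible E dep c loc (snd p) (fst p) Q1" by auto
  have fin: "finite ?U" using Cons.prems by auto
  have e: "concat_walks dep (map fst (p # P)) = fst p @ tl ?W" by (simp add: concat_walks_def)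
  have u: "\<Union>(snd ` set (p # P)) = snd p \<union> ?U" by simp
  have "\<exists>Q. cvrp_feasible E dep c loc (snd p \<union> ?U) (fst p @ tl ?W) Q"
    using cvrp_compose[OF f1 f' fin] .
  moreover have "walk_len l (fst p @ tl ?W) = walk_len l (fst p) + walk_len l ?W"
    using f1 f' by (intro walk_len_append) (auto simp: cvrp_feasible_def)
  ultimately show ?case unfolding e u using len' by simp
qed



lemma trip_through:
  assumes g: "fdp_graph V E l dep" and v: "v \<in> V" "v \<noteq> dep"
  shows "\<exists>W. is_trip_walk E dep W \<and> v \<in> set W"
proof -
  obtain ws where ws: "is_walk E ws" "hd ws = dep" "last ws = v"
    using g v unfolding fdp_graph_def by blast
  have "ws \<noteq> []" using ws by auto
  then have "dep \<in> set ws" using ws(2) by auto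
  then obtain xs ys where s: "ws = xs @ dep # ys" "dep \<notin> set ys" using split_list_last by metis
  have w: "is_walk E (dep # ys)" using is_walk_suffix[of E xs "dep # ys"] ws s by simp
  have ys: "ys \<noteq> []" using s ws v by auto
  have "last ys = v" using s ws ys by simp
  then have "v \<in> set ys" using ys last_in_set by metis
  then show ?thesis using out_and_back(1,3)[OF w ys s(2)] by (meson list.set_intros(2) subsetD)
qed

lemma sched_exists:
  fixes V :: "'v set" and R :: "'r set"
  assumes g: "fdp_graph V E l dep" and k: "k \<ge> 1" and c: "c > 0" and fin: "finite R"
    and R: "\<forall>\<rho>\<in>R. arr \<rho> \<ge> 0 \<and> loc \<rho> \<in> V - {dep}"
  shows "\<exists>sched. feasible_schedule E l dep k c arr loc R sched"
proof -
  obtain rs where rs: "set rs = R" "distinct rs" using finite_distinct_list[OF fin] by blast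
  have "\<forall>\<rho>\<in>R. \<exists>W. is_trip_walk E dep W \<and> loc \<rho> \<in> set W"
    using trip_through[OF g] R by blast
  then obtain Wf where Wf: "\<forall>\<rho>\<in>R. is_trip_walk E dep (Wf \<rho>) \<and> loc \<rho> \<in> set (Wf \<rho>)" by metis
  have lpos: "\<forall>e\<in>E. l e > 0" using g by (simp add: fdp_graph_def)
  have nn: "walk_len l (Wf \<rho>) \<ge> 0" if "\<rho> \<in> R" for \<rho>
    using Wf that walk_len_nonneg[OF _ lpos] by (auto simp: is_trip_walk_def)
  define Mx where "Mx = Max (insert 0 (arr ` R))"
  define L where "L = (\<Sum>\<rho>\<in>R. walk_len l (Wf \<rho>))"
  have Mx0: "Mx \<ge> 0" and Mxa: "\<forall>\<rho>\<in>R. arr \<rho> \<le> Mx" unfolding Mx_def using fin by auto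
  have L0: "L \<ge> 0" unfolding L_def using nn by (simp add: sum_nonneg)
  have WL: "walk_len l (Wf \<rho>) \<le> L" if "\<rho> \<in> R" for \<rho>
    unfolding L_def using fin that nn by (intro member_le_sum) auto
  define trip where "trip n = (Mx + real n * L, Wf (rs ! n), {rs ! n})" for n
  define sched :: "nat \<Rightarrow> ('v, 'r) trip list" where "sched i = (if i = 0 then map trip [0..<length rs] else [])" for i
  have c1: "enat (card {x}) \<le> c" for x :: 'r using c by (cases c) (auto simp: zero_enat_def one_enat_def)
  have rsR: "rs ! n \<in> R" if "n < length rs" for n using rs that by auto
  have "feasible_schedule E l dep k c arr loc R sched"
    unfolding feasible_schedule_def
  proof (intro conjI allI impI ballI)
    fix i j assume i: "i < k" and j: "j < length (sched i)"
    then have i0: "i = 0" and jl: "j < length rs" by (auto simp: sched_def split: if_splits)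
    have "0 \<le> Mx + real j * L" using Mx0 L0 by simp
    then show "valid_trip E dep c arr loc R (sched i ! j)"
      using i0 jl rsR[OF jl] Wf Mxa c1 L0 unfolding valid_trip_def sched_def trip_def
      by (auto intro: order_trans[of _ Mx])
  next
    fix i j assume i: "i < k" and j: "Suc j < length (sched i)"
    then have i0: "i = 0" and jl: "Suc j < length rs" by (auto simp: sched_def split: if_splits)
    have "walk_len l (Wf (rs ! j)) \<le> L" using WL rsR jl by simp
    then show "trip_end l (sched i ! j) \<le> fst (sched i ! Suc j)"
      using i0 jl unfolding trip_end_def sched_def trip_def by (simp add: algebra_simps)
  next
    fix \<rho> assume r: "\<rho> \<in> R"
    then obtain n where n: "n < length rs" "rs ! n = \<rho>" using rs by (auto simp: in_set_conv_nth)
    show "\<exists>!p. fst p < k \<and> snd p < length (sched (fst p)) \<and> \<rho> \<in> snd (snd (sched (fst p) ! snd p))"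
    proof (rule ex1I[of _ "(0, n)"])
      show "fst (0, n) < k \<and> snd (0, n) < length (sched (fst (0::nat, n))) \<and> \<rho> \<in> snd (snd (sched (fst (0::nat, n)) ! snd (0::nat, n)))"
        using k n by (simp add: sched_def trip_def)
    next
      fix p :: "nat \<times> nat"
      assume h: "fst p < k \<and> snd p < length (sched (fst p)) \<and> \<rho> \<in> snd (snd (sched (fst p) ! snd p))"
      then have p0: "fst p = 0" and pl: "snd p < length rs" by (auto simp: sched_def split: if_splits)
      then have "rs ! snd p = \<rho>" using h by (simp add: sched_def trip_def)
      then have "snd p = n" using n pl rs(2) nth_eq_iff_index_eq by metis
      then show "p = (0, n)" using p0 by (cases p) auto
    qed
  qed
  then show ?thesis by blast
qed



lemma valid_trip_parts:
  assumes "valid_trip E dep c arr loc R tr"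
  shows "fst tr \<ge> 0" "is_trip_walk E dep (fst (snd tr))" "snd (snd tr) \<subseteq> R"
    "enat (card (snd (snd tr))) \<le> c"
    "\<forall>\<rho>\<in>snd (snd tr). arr \<rho> \<le> fst tr \<and> loc \<rho> \<in> set (fst (snd tr))"
  using assms by (cases tr; auto simp: valid_trip_def)+

lemma serve_time:
  assumes fs: "feasible_schedule E l dep k c arr loc R sched" and i: "i < k"
    and j: "j < length (sched i)" and r: "\<rho> \<in> snd (snd (sched i ! j))" "\<rho> \<in> R"
  shows "service_time l k loc sched \<rho> = visit_time l (sched i ! j) (loc \<rho>)"
proof -
  have ex: "\<exists>!p. fst p < k \<and> snd p < length (sched (fst p)) \<and> \<rho> \<in> snd (snd (sched (fst p) ! snd p))"
    using fs r unfolding feasible_schedule_def by blast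
  have "serving_trip k \<rho> sched = (i, j)"
    unfolding serving_trip_def
  proof (rule the1_equality[OF ex])
    show "fst (i, j) < k \<and> snd (i, j) < length (sched (fst (i, j))) \<and> \<rho> \<in> snd (snd (sched (fst (i, j)) ! snd (i, j)))"
      using i j r by simp
  qed
  then show ?thesis unfolding service_time_def by simp
qed

lemma telescope:
  assumes "\<forall>j. Suc j < length ts \<longrightarrow> trip_end l (ts ! j) \<le> fst (ts ! Suc j)" and "j1 \<le> jm"
  shows "jm < length ts \<longrightarrow> (\<Sum>j\<in>{j1..<jm}. walk_len l (fst (snd (ts ! j)))) \<le> fst (ts ! jm) - fst (ts ! j1)"
  using assms(2)
proof (induction jm rule: dec_induct)
  case base then show ?case by simp
next
  case (step n)
  show ?case
  proof
    assume "Suc n < length ts"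
    then have "trip_end l (ts ! n) \<le> fst (ts ! Suc n)" using assms(1) by blast
    moreover have "(\<Sum>j\<in>{j1..<n}. walk_len l (fst (snd (ts ! j)))) \<le> fst (ts ! n) - fst (ts ! j1)"
      using step \<open>Suc n < length ts\<close> by simp
    ultimately show "(\<Sum>j\<in>{j1..<Suc n}. walk_len l (fst (snd (ts ! j)))) \<le> fst (ts ! Suc n) - fst (ts ! j1)"
      using step(1) by (simp add: trip_end_def)
  qed
qed



lemma vehicle_pieces:
  fixes R :: "'r set" and sched :: "nat \<Rightarrow> ('v, 'r) trip list"
  assumes fs: "feasible_schedule E l dep k c arr loc R sched" and i: "i < k" and fin: "finite R"
    and Rl: "\<forall>\<rho>\<in>R. loc \<rho> \<noteq> dep"
    and M: "\<forall>\<rho>\<in>R. service_time l k loc sched \<rho> - arr \<rho> \<le> M" and M0: "M \<ge> 0" and ab: "a \<le> b"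
    and R'_def: "R' = {\<rho>\<in>R. a \<le> arr \<rho> \<and> arr \<rho> \<le> b}"
  shows "\<exists>P. (\<forall>p\<in>set P. finite (snd p) \<and> (\<exists>Q. cvrp_feasible E dep c loc (snd p) (fst p) Q))
     \<and> \<Union>(snd ` set P) = {\<rho>\<in>R'. \<exists>j<length (sched i). \<rho> \<in> snd (snd (sched i ! j))}
     \<and> sum_list (map (\<lambda>p. walk_len l (fst p)) P) \<le> b - a + 2 * M"
proof -
  define ts where "ts = sched i"
  define S where "S j = snd (snd (ts ! j))" for j
  define T where "T j = fst (ts ! j)" for j
  define W where "W j = fst (snd (ts ! j))" for j
  define J where "J = {j. j < length ts \<and> S j \<inter> R' \<noteq> {}}"
  have vt: "valid_trip E dep c arr loc R (ts ! j)" if "j < length ts" for j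
    using fs i that unfolding feasible_schedule_def ts_def by blast
  have vT: "T j \<ge> 0" and vW: "is_trip_walk E dep (W j)" and vS: "S j \<subseteq> R"
    and vc: "enat (card (S j)) \<le> c" and va: "\<forall>\<rho>\<in>S j. arr \<rho> \<le> T j \<and> loc \<rho> \<in> set (W j)"
    if "j < length ts" for j
    using valid_trip_parts[OF vt[OF that]] unfolding T_def W_def S_def by auto
  have R'R: "R' \<subseteq> R" unfolding R'_def by auto
  have piece_ok: "finite (S j \<inter> R') \<and> (\<exists>Q. cvrp_feasible E dep c loc (S j \<inter> R') (W j) Q)"
    if "j < length ts" for j
  proof -
    have f: "finite (S j \<inter> R')" using vS[OF that] fin finite_subset by blast
    have "card (S j \<inter> R') \<le> card (S j)" using vS[OF that] fin by (meson card_mono finite_subset inf_le1)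
    then have "enat (card (S j \<inter> R')) \<le> c" using vc[OF that] by (meson enat_ord_simps(1) order_trans)
    moreover have "\<forall>\<rho>\<in>S j \<inter> R'. loc \<rho> \<in> set (W j) \<and> loc \<rho> \<noteq> dep" using va[OF that] vS[OF that] Rl by blast
    ultimately show ?thesis using cvrp_base[OF vW[OF that] f] f by blast
  qed
  show ?thesis
  proof (cases "J = {}")
    case True
    have "{\<rho>\<in>R'. \<exists>j<length (sched i). \<rho> \<in> snd (snd (sched i ! j))} = {}"
      using True unfolding J_def S_def ts_def by blast
    then show ?thesis using M0 ab by (intro exI[of _ "[]"]) auto
  next
    case False
    have finJ: "finite J" unfolding J_def by auto
    define j1 where "j1 = Min J"
    define jm where "jm = Max J"
    have j1J: "j1 \<in> J" and jmJ: "jm \<in> J" unfolding j1_def jm_def using finJ False by auto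
    have j1le: "j1 \<le> j" and jmge: "j \<le> jm" if "j \<in> J" for j
      unfolding j1_def jm_def using finJ that by auto
    have jml: "jm < length ts" using jmJ unfolding J_def by auto
    have j1jm: "j1 \<le> jm" using j1le jmJ .
    define Sm where "Sm = S jm \<inter> R'"
    have Smne: "Sm \<noteq> {}" using jmJ unfolding J_def Sm_def by auto
    have Smfin: "finite Sm" unfolding Sm_def using vS[OF jml] fin finite_subset by blast
    define fv where "fv \<rho> = first_visit (W jm) (loc \<rho>)" for \<rho>
    define m where "m = Max (fv ` Sm)"
    obtain rs where rs: "rs \<in> Sm" "fv rs = m" unfolding m_def using Smne Smfin
      by (metis (mono_tags, lifting) Max_in finite_imageI image_iff image_is_empty)
    have fvle: "fv \<rho> \<le> m" if "\<rho> \<in> Sm" for \<rho> unfolding m_def using Smfin that by auto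
    have rsR: "rs \<in> R" and rsS: "rs \<in> S jm" and rsR': "rs \<in> R'" using rs vS[OF jml] unfolding Sm_def by auto
    have locin: "loc \<rho> \<in> set (W jm)" if "\<rho> \<in> Sm" for \<rho> using va[OF jml] that unfolding Sm_def by auto
    have locnd: "loc \<rho> \<noteq> dep" if "\<rho> \<in> Sm" for \<rho> using Rl vS[OF jml] that unfolding Sm_def by auto
    have twm: "is_trip_walk E dep (W jm)" using vW[OF jml] .
    then have wWm: "is_walk E (W jm)" unfolding is_trip_walk_def by simp
    have "W jm \<noteq> [dep]" using locin[OF rs(1)] locnd[OF rs(1)] by auto
    then obtain mid where mid: "W jm = dep # mid @ [dep]" "dep \<notin> set mid"
      using twm unfolding trip_walk_char by blast
    have mprops: "m < length (W jm)" "W jm ! m = loc rs"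
      using fv_props[OF locin[OF rs(1)]] rs(2) unfolding fv_def by auto
    have m0: "m \<noteq> 0" using mprops mid locnd[OF rs(1)] by (metis nth_Cons_0)
    have mlen: "m \<le> length mid"
    proof (rule ccontr)
      assume "\<not> m \<le> length mid"
      then have "m = Suc (length mid)" using mprops(1) mid by simp
      then have "W jm ! m = dep" using mid by (simp add: nth_append)
      then show False using mprops(2) locnd[OF rs(1)] by simp
    qed
    define pm where "pm = take m mid"
    have tk: "take (Suc m) (W jm) = dep # pm" unfolding pm_def using mid mlen by simp
    have pmne: "pm \<noteq> []" unfolding pm_def using m0 mlen by (cases mid) auto
    have pmnd: "dep \<notin> set pm" unfolding pm_def using mid(2) by (meson in_set_takeD)
    have wpm: "is_walk E (dep # pm)"
      using is_walk_prefix[of E "take (Suc m) (W jm)" "drop (Suc m) (W jm)"] wWm tk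
      by (metis append_take_drop_id list.distinct(1))
    define TW where "TW = (dep # pm) @ tl (rev (dep # pm))"
    have TWt: "is_trip_walk E dep TW" and TWl: "walk_len l TW = 2 * walk_len l (dep # pm)"
      and TWs: "set (dep # pm) \<subseteq> set TW"
      using out_and_back(1,3)[OF wpm pmne pmnd] out_and_back(2)[OF wpm pmne pmnd, of l] unfolding TW_def by auto
    have lastok: "finite Sm \<and> (\<exists>Q. cvrp_feasible E dep c loc Sm TW Q)"
    proof -
      have "card Sm \<le> card (S jm)" unfolding Sm_def using vS[OF jml] fin by (meson card_mono finite_subset inf_le1)
      then have cap: "enat (card Sm) \<le> c" using vc[OF jml] by (meson enat_ord_simps(1) order_trans)
      have "loc \<rho> \<in> set TW" if "\<rho> \<in> Sm" for \<rho>
      proof -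
        have f: "fv \<rho> < length (W jm)" "W jm ! fv \<rho> = loc \<rho>"
          using fv_props[OF locin[OF that]] unfolding fv_def by auto
        have "fv \<rho> < Suc m" using fvle[OF that] by simp
        then have "loc \<rho> \<in> set (take (Suc m) (W jm))" using f
          by (metis in_set_conv_nth length_take min_less_iff_conj nth_take)
        then show ?thesis using tk TWs by auto
      qed
      then show ?thesis using cvrp_base[OF TWt Smfin cap] locnd Smfin by blast
    qed
    define P where "P = map (\<lambda>j. (W j, S j \<inter> R')) [j1..<jm] @ [(TW, Sm)]"
    have Pok: "\<forall>p\<in>set P. finite (snd p) \<and> (\<exists>Q. cvrp_feasible E dep c loc (snd p) (fst p) Q)"
      unfolding P_def using piece_ok jml lastok by auto
    have Pu: "\<Union>(snd ` set P) = {\<rho>\<in>R'. \<exists>j<length (sched i). \<rho> \<in> snd (snd (sched i ! j))}"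
    proof
      show "\<Union>(snd ` set P) \<subseteq> {\<rho>\<in>R'. \<exists>j<length (sched i). \<rho> \<in> snd (snd (sched i ! j))}"
        unfolding P_def Sm_def using jml unfolding S_def ts_def
        by (auto intro: less_trans) (meson order.strict_trans)
    next
      show "{\<rho>\<in>R'. \<exists>j<length (sched i). \<rho> \<in> snd (snd (sched i ! j))} \<subseteq> \<Union>(snd ` set P)"
      proof
        fix \<rho> assume "\<rho> \<in> {\<rho>\<in>R'. \<exists>j<length (sched i). \<rho> \<in> snd (snd (sched i ! j))}"
        then obtain j where j: "\<rho> \<in> R'" "j < length ts" "\<rho> \<in> S j" unfolding S_def ts_def by auto
        then have "j \<in> J" unfolding J_def by auto
        then have "j1 \<le> j" "j \<le> jm" using j1le jmge by auto
        then consider "j \<in> {j1..<jm}" | "j = jm" by force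
        then show "\<rho> \<in> \<Union>(snd ` set P)"
        proof cases
          case 1 then show ?thesis unfolding P_def using j by force
        next
          case 2 then show ?thesis unfolding P_def Sm_def using j by force
        qed
      qed
    qed
    have sumP: "sum_list (map (\<lambda>p. walk_len l (fst p)) P) = (\<Sum>j\<in>{j1..<jm}. walk_len l (W j)) + walk_len l TW"
      unfolding P_def by (simp add: sum_set_upt_conv_sum_list_nat[symmetric] o_def)
    have tel: "(\<Sum>j\<in>{j1..<jm}. walk_len l (W j)) \<le> T jm - T j1"
      using telescope[of ts l j1 jm] fs i jml j1jm unfolding feasible_schedule_def W_def T_def ts_def by blast
    have Tj1: "a \<le> T j1"
    proof -
      obtain \<rho> where "\<rho> \<in> S j1" "\<rho> \<in> R'" using j1J unfolding J_def by auto
      moreover have "j1 < length ts" using j1J unfolding J_def by auto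
      ultimately show ?thesis using va unfolding R'_def by force
    qed
    define p where "p = walk_len l (dep # pm)"
    have "service_time l k loc sched rs = visit_time l (ts ! jm) (loc rs)"
      using serve_time[OF fs i, of jm rs] jml rsS rsR unfolding ts_def S_def by simp
    also have "\<dots> = T jm + p" unfolding visit_time_def T_def p_def
      using rs(2) tk unfolding fv_def W_def by simp
    finally have st: "service_time l k loc sched rs = T jm + p" .
    have "T jm + p - arr rs \<le> M" using M rsR st by auto
    moreover have "arr rs \<le> T jm" using va[OF jml] rsS by auto
    moreover have "arr rs \<le> b" using rsR' unfolding R'_def by auto
    ultimately have "sum_list (map (\<lambda>p. walk_len l (fst p)) P) \<le> b - a + 2 * M"
      using sumP tel Tj1 TWl unfolding p_def by linarith
    then show ?thesis using Pok Pu by blast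
  qed
qed



lemma sum_list_map_concat: "sum_list (map f (concat xss)) = sum_list (map (\<lambda>xs. sum_list (map f xs)) xss)"
  by (induct xss) auto

lemma cvrp_bound_sched:
  fixes R :: "'r set" and sched :: "nat \<Rightarrow> ('v, 'r) trip list"
  assumes g: "fdp_graph V E l dep" and fs: "feasible_schedule E l dep k c arr loc R sched"
    and fin: "finite R" and Rl: "\<forall>\<rho>\<in>R. loc \<rho> \<noteq> dep" and ab: "a \<le> b"
  shows "cvrp_opt E l dep c loc {\<rho>\<in>R. a \<le> arr \<rho> \<and> arr \<rho> \<le> b}
           \<le> real k * (b - a + 2 * max_flow_time l k arr loc R sched)"
proof -
  define M where "M = max_flow_time l k arr loc R sched"
  define R' where "R' = {\<rho>\<in>R. a \<le> arr \<rho> \<and> arr \<rho> \<le> b}"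
  have lpos: "\<forall>e\<in>E. l e > 0" using g by (simp add: fdp_graph_def)
  have M0: "M \<ge> 0" unfolding M_def max_flow_time_def using fin by (intro Max_ge) auto
  have Mb: "\<forall>\<rho>\<in>R. service_time l k loc sched \<rho> - arr \<rho> \<le> M"
    unfolding M_def max_flow_time_def using fin by (intro ballI Max_ge) auto
  define Phi where "Phi i P \<longleftrightarrow> (\<forall>p\<in>set P. finite (snd p) \<and> (\<exists>Q. cvrp_feasible E dep c loc (snd p) (fst p) Q))
     \<and> \<Union>(snd ` set P) = {\<rho>\<in>R'. \<exists>j<length (sched i). \<rho> \<in> snd (snd (sched i ! j))}
     \<and> sum_list (map (\<lambda>p. walk_len l (fst p)) P) \<le> b - a + 2 * M" for i P
  have "\<exists>P. Phi i P" if "i < k" for i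
    unfolding Phi_def by (rule vehicle_pieces[OF fs that fin Rl Mb M0 ab R'_def])
  then have "\<forall>i. \<exists>P. i < k \<longrightarrow> Phi i P" by blast
  then obtain Pf where Pf0: "\<forall>i. i < k \<longrightarrow> Phi i (Pf i)" using choice[of "\<lambda>i P. i < k \<longrightarrow> Phi i P"] by blast
  then have Pf: "(\<forall>p\<in>set (Pf i). finite (snd p) \<and> (\<exists>Q. cvrp_feasible E dep c loc (snd p) (fst p) Q))
     \<and> \<Union>(snd ` set (Pf i)) = {\<rho>\<in>R'. \<exists>j<length (sched i). \<rho> \<in> snd (snd (sched i ! j))}
     \<and> sum_list (map (\<lambda>p. walk_len l (fst p)) (Pf i)) \<le> b - a + 2 * M" if "i < k" for i
  proof -
    have "Phi i (Pf i)" using Pf0 that by blast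
    then show ?thesis unfolding Phi_def .
  qed
  have Pf1: "\<forall>p\<in>set (Pf i). finite (snd p) \<and> (\<exists>Q. cvrp_feasible E dep c loc (snd p) (fst p) Q)"
    if "i < k" for i using Pf[OF that] by (rule conjunct1)
  have Pf2: "\<Union>(snd ` set (Pf i)) = {\<rho>\<in>R'. \<exists>j<length (sched i). \<rho> \<in> snd (snd (sched i ! j))}"
    if "i < k" for i using Pf[OF that] by (rule conjunct2[THEN conjunct1])
  have Pf3: "sum_list (map (\<lambda>p. walk_len l (fst p)) (Pf i)) \<le> b - a + 2 * M"
    if "i < k" for i using Pf[OF that] by (rule conjunct2[THEN conjunct2])
  define PP where "PP = concat (map Pf [0..<k])"
  have inPP: "\<exists>i<k. p \<in> set (Pf i)" if "p \<in> set PP" for p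
    using that unfolding PP_def by auto
  have PPok: "\<forall>p\<in>set PP. finite (snd p) \<and> (\<exists>Q. cvrp_feasible E dep c loc (snd p) (fst p) Q)"
  proof
    fix p assume "p \<in> set PP"
    then obtain i where "i < k" "p \<in> set (Pf i)" using inPP by blast
    then show "finite (snd p) \<and> (\<exists>Q. cvrp_feasible E dep c loc (snd p) (fst p) Q)" using Pf1 by blast
  qed
  define W where "W = concat_walks dep (map fst PP)"
  have cc: "(\<exists>Q. cvrp_feasible E dep c loc (\<Union>(snd ` set PP)) W Q)
     \<and> walk_len l W = sum_list (map (\<lambda>p. walk_len l (fst p)) PP)"
    unfolding W_def by (rule cvrp_concat[OF PPok])
  have U: "\<Union>(snd ` set PP) = R'"
  proof
    show "\<Union>(snd ` set PP) \<subseteq> R'"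
    proof
      fix \<rho> assume "\<rho> \<in> \<Union>(snd ` set PP)"
      then obtain p where p: "p \<in> set PP" "\<rho> \<in> snd p" by blast
      then obtain i where i: "i < k" "p \<in> set (Pf i)" using inPP by blast
      then have "\<rho> \<in> \<Union>(snd ` set (Pf i))" using p by blast
      then show "\<rho> \<in> R'" using Pf2[OF i(1)] by blast
    qed
  next
    show "R' \<subseteq> \<Union>(snd ` set PP)"
    proof
      fix \<rho> assume r: "\<rho> \<in> R'"
      then have "\<rho> \<in> R" unfolding R'_def by auto
      then obtain p where p: "fst p < k" "snd p < length (sched (fst p))" "\<rho> \<in> snd (snd (sched (fst p) ! snd p))"
        using fs unfolding feasible_schedule_def by blast
      then have "\<rho> \<in> \<Union>(snd ` set (Pf (fst p)))" using Pf2[OF p(1)] r by blast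
      moreover have "set (Pf (fst p)) \<subseteq> set PP" unfolding PP_def using p(1) by auto
      ultimately show "\<rho> \<in> \<Union>(snd ` set PP)" by blast
    qed
  qed
  have "sum_list (map (\<lambda>p. walk_len l (fst p)) PP) = (\<Sum>i\<in>{0..<k}. sum_list (map (\<lambda>p. walk_len l (fst p)) (Pf i)))"
    unfolding PP_def sum_list_map_concat by (simp add: sum_set_upt_conv_sum_list_nat[symmetric] o_def)
  also have "\<dots> \<le> real (card {0..<k}) * (b - a + 2 * M)"
    by (rule sum_bounded_above) (use Pf3 in simp)
  finally have WL: "walk_len l W \<le> real k * (b - a + 2 * M)" using cc by simp
  obtain Q where fQ: "cvrp_feasible E dep c loc R' W Q" using cc U by auto
  have "cvrp_opt E l dep c loc R' \<le> walk_len l W"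
    unfolding cvrp_opt_def
  proof (rule cInf_lower)
    show "walk_len l W \<in> {walk_len l ws |ws Q. cvrp_feasible E dep c loc R' ws Q}" using fQ by blast
    show "bdd_below {walk_len l ws |ws Q. cvrp_feasible E dep c loc R' ws Q}"
    proof (rule bdd_belowI)
      fix x assume "x \<in> {walk_len l ws |ws Q. cvrp_feasible E dep c loc R' ws Q}"
      then obtain ws Q where "x = walk_len l ws" "cvrp_feasible E dep c loc R' ws Q" by blast
      then show "0 \<le> x" using walk_len_nonneg[OF _ lpos] unfolding cvrp_feasible_def by blast
    qed
  qed
  then show ?thesis using WL unfolding R'_def M_def by simp
qed

theorem lemma5p1:
  fixes V :: "'v set" and E :: "'v set set" and l :: "'v set \<Rightarrow> real" and dep :: 'v
    and k :: nat and c :: enat and R :: "'r set" and arr :: "'r \<Rightarrow> real" and loc :: "'r \<Rightarrow> 'v"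
    and F a b :: real
  assumes "fdp_graph V E l dep"
    and "k \<ge> 1" and "c > 0"
    and "finite R" and "\<forall>\<rho>\<in>R. arr \<rho> \<ge> 0 \<and> loc \<rho> \<in> V - {dep}"
    and "F \<ge> fdp_opt E l dep k c arr loc R"
    and "a \<le> b"
  shows "cvrp_opt E l dep c loc {\<rho>\<in>R. a \<le> arr \<rho> \<and> arr \<rho> \<le> b} \<le> real k * (b - a + 2 * F)"
proof -
  let ?C = "cvrp_opt E l dep c loc {\<rho>\<in>R. a \<le> arr \<rho> \<and> arr \<rho> \<le> b}"
  define X where "X = {max_flow_time l k arr loc R sched | sched. feasible_schedule E l dep k c arr loc R sched}"
  have Xne: "X \<noteq> {}" unfolding X_def using sched_exists[OF assms(1-5)] by blast
  have Rl: "\<forall>\<rho>\<in>R. loc \<rho> \<noteq> dep" using assms(5) by blast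
  have kpos: "real k > 0" using assms(2) by simp
  define z where "z = (?C / real k - (b - a)) / 2"
  have "z \<le> x" if xX: "x \<in> X" for x
  proof -
    obtain sched where "feasible_schedule E l dep k c arr loc R sched" "x = max_flow_time l k arr loc R sched"
      using xX unfolding X_def by blast
    then have "?C \<le> real k * (b - a + 2 * x)" using cvrp_bound_sched[OF assms(1) _ assms(4) Rl assms(7)] by simp
    then have "?C / real k \<le> b - a + 2 * x" using kpos by (simp add: divide_le_eq mult.commute)
    then show ?thesis unfolding z_def by simp
  qed
  then have "z \<le> Inf X" using Xne by (intro cInf_greatest) auto
  also have "Inf X = fdp_opt E l dep k c arr loc R" unfolding X_def fdp_opt_def by simp
  finally have "z \<le> F" using assms(6) by simp
  moreover have "?C = real k * (b - a + 2 * z)" unfolding z_def using kpos by (simp add: field_simps)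
  ultimately show ?thesis using kpos by (simp add: mult_left_mono)
qed

end
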